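(* Let $\mathbf{A}\in\mathbb{R}^{N\times N}$, $\mathbf{B}\in\mathbb{R}^{N\times m}$, $\mathbf{C}\in\mathbb{R}^{n\times N}$. Then for every integer $i\ge 0$, $$R_i\le \operatorname{rank}(\mathbf{W})-\operatorname{rank}(\mathbf{A}\mathbf{W})\le N-\operatorname{rank}(\mathbf{A}).$$ Consequently, for any integer $0<s\le m$, if $\operatorname{rank}(\mathbf{C}\mathbf{W})=n$ and $s\ge \operatorname{rank}(\mathbf{W})-\operatorname{rank}(\mathbf{A}\mathbf{W})$, then the system is output $s$-sparse controllable.
   Context: A vector in $\mathbb{R}^m$ is $s$-sparse if at most $s$ of its entries are nonzero. The system $(\mathbf{A},\mathbf{B},\mathbf{C})$ with $\mathbf{x}_k=\mathbf{A}\mathbf{x}_{k-1}+\mathbf{B}\mathbf{u}_k$, $\mathbf{y}_k=\mathbf{C}\mathbf{x}_k$ is called output $s$-sparse controllable if there exists an integer $0<K<\infty$ such that for every initial state $\mathbf{x}_0\in\mathbb{R}^N$ and every target $\mathbf{y}_f\in\mathbb{R}^n$ there exist $s$-sparse inputs $\mathbf{u}_1,\dots,\mathbf{u}_K\in\mathbb{R}^m$ with $\mathbf{y}_K=\mathbf{C}\sum_{k=1}^K\mathbf{A}^{K-k}\mathbf{B}\mathbf{u}_k+\mathbf{C}\mathbf{A}^K\mathbf{x}_0=\mathbf{y}_f$ (the supports of the $\mathbf{u}_k$ may differ across $k$). The controllability matrix is $\mathbf{W}=[\mathbf{A}^{N-1}\mathbf{B}\ \ \mathbf{A}^{N-2}\mathbf{B}\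 \cdots\ \mathbf{B}]\in\mathbb{R}^{N\times Nm}$, and for integers $i\ge 0$, $R_i=\operatorname{rank}(\mathbf{C}\mathbf{A}^i\mathbf{W})-\operatorname{rank}(\mathbf{C}\mathbf{A}^{i+1}\mathbf{W})$. *)

theory Defs
  imports "Jordan_Normal_Form.DL_Rank"
begin

(* Rank of a real matrix with r rows (column rank = dim of the column span). *)
abbreviation rk :: "nat \<Rightarrow> real mat \<Rightarrow> nat" where
  "rk r M \<equiv> vec_space.rank r M"

(* Controllability matrix W = [A^(N-1) B  A^(N-2) B ... B], N = dim A, m = #columns of B.
   Column j belongs to block j div m (block b is A^(N-1-b) B), column j mod m inside it. *)
definition ctrb_mat :: "real mat \<Rightarrow> real mat \<Rightarrow> real mat" where
  "ctrb_mat A B = (let N = dim_row A; m = dim_col B in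
     mat N (N * m) (\<lambda>(i, j). ((A ^\<^sub>m (N - 1 - j div m)) * B) $$ (i, j mod m)))"

(* s-sparse: at most s nonzero entries *)
definition sparse_vec :: "nat \<Rightarrow> real vec \<Rightarrow> bool" where
  "sparse_vec s u \<longleftrightarrow> card {j. j < dim_vec u \<and> u $ j \<noteq> 0} \<le> s"

(* R_i = rank(C A^i W) - rank(C A^(i+1) W), as an integer *)
definition R_idx :: "real mat \<Rightarrow> real mat \<Rightarrow> real mat \<Rightarrow> nat \<Rightarrow> int" where
  "R_idx A B C i = int (rk (dim_row C) (C * (A ^\<^sub>m i) * ctrb_mat A B))
                 - int (rk (dim_row C) (C * (A ^\<^sub>m (Suc i)) * ctrb_mat A B))"

(* Output s-sparse controllability of (A,B,C), with N = dim A, m = #inputs, n = #outputs *)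
definition output_sparse_controllable :: "real mat \<Rightarrow> real mat \<Rightarrow> real mat \<Rightarrow> nat \<Rightarrow> bool" where
  "output_sparse_controllable A B C s \<longleftrightarrow>
     (let N = dim_row A; m = dim_col B; n = dim_row C in
      \<exists>K::nat. 0 < K \<and>
        (\<forall>x0 \<in> carrier_vec N. \<forall>yf \<in> carrier_vec n.
          \<exists>u :: nat \<Rightarrow> real vec.
            (\<forall>k \<in> {1..K}. u k \<in> carrier_vec m \<and> sparse_vec s (u k)) \<and>
            C *\<^sub>v (finsum_vec TYPE(real) N (\<lambda>k. (A ^\<^sub>m (K - k)) * B *\<^sub>v u k) {1..K})
              + C *\<^sub>v ((A ^\<^sub>m K) *\<^sub>v x0) = yf))"

end

theory Submission
  imports Defs
begin

context vec_space begin

definition sr :: "'a vec set \<Rightarrow> nat" where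
  "sr S = vectorspace.dim class_ring (vs (span S))"

lemma li_empty: "lin_indpt {}"
  by (metis empty_subsetI fin_dim finite_basis_exists subset_li_is_li basis_def)

lemma maxU_exists:
  assumes "finite S" "S \<subseteq> carrier_vec n" "B \<subseteq> S" "lin_indpt B"
  shows "\<exists>U. maximal U (\<lambda>T. T \<subseteq> S \<and> lin_indpt T) \<and> B \<subseteq> U"
  using maximal_exists_superset[of S "\<lambda>T. T \<subseteq> S \<and> lin_indpt T" B] assms by blast

lemma maxU_span:
  assumes "S \<subseteq> carrier_vec n" "maximal U (\<lambda>T. T \<subseteq> S \<and> lin_indpt T)"
  shows "S \<subseteq> span U"
proof
  fix s assume s: "s \<in> S"
  have U: "U \<subseteq> S" "lin_indpt U" using assms(2) unfolding maximal_def by auto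
  show "s \<in> span U"
  proof (rule ccontr)
    assume ns: "s \<notin> span U"
    have "s \<notin> U" using ns span_mem U assms(1) by blast
    have "lin_indpt (U \<union> {s})"
      using lin_dep_iff_in_span[of U s] ns U assms(1) s \<open>s \<notin> U\<close> by auto
    then have "U \<union> {s} = U" using assms(2) s U unfolding maximal_def by blast
    then show False using \<open>s \<notin> U\<close> by blast
  qed
qed

lemma sr_card:
  assumes "finite S" "S \<subseteq> carrier_vec n" "maximal U (\<lambda>T. T \<subseteq> S \<and> lin_indpt T)"
  shows "sr S = card U"
  unfolding sr_def using dim_span[OF assms(2) assms(1) assms(3)] by simp

lemma li_in_span_le:
  assumes "finite T" "T \<subseteq> carrier_vec n" "U \<subseteq> span T" "lin_indpt U"
  shows "finite U \<and> card U \<le> sr T"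
proof -
  have sub: "submodule class_ring (span T) V" using span_is_submodule assms by auto
  have vs: "vectorspace class_ring (vs (span T))"
    using assms span_is_subspace subspace_def subspace_is_vs by simp
  have li: "LinearCombinations.module.lin_indpt class_ring (vs (span T)) U"
    using span_li_not_depend(2)[OF assms(3) sub] assms(4) by simp
  have fd: "vectorspace.fin_dim class_ring (vs (span T))" using fin_dim_span[of T] assms by simp
  have "U \<subseteq> carrier (vs (span T))" using assms(3) by simp
  then show ?thesis
    using vectorspace.li_le_dim[OF vs fd _ li] unfolding sr_def by auto
qed

lemma sr_mono:
  assumes "finite S" "S \<subseteq> carrier_vec n" "finite T" "T \<subseteq> carrier_vec n" "S \<subseteq> span T"
  shows "sr S \<le> sr T"
proof -
  obtain U where U: "maximal U (\<lambda>X. X \<subseteq> S \<and> lin_indpt X)"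
    using maxU_exists[OF assms(1,2), of "{}"] li_empty by auto
  have "U \<subseteq> S" "lin_indpt U" using U unfolding maximal_def by auto
  then have "card U \<le> sr T" using li_in_span_le[OF assms(3,4), of U] assms(5) by auto
  then show ?thesis using sr_card[OF assms(1,2) U] by simp
qed

lemma sr_eq_span:
  assumes "finite S" "S \<subseteq> carrier_vec n" "finite T" "T \<subseteq> carrier_vec n" "S \<subseteq> span T"
    and "sr T \<le> sr S"
  shows "span T \<subseteq> span S"
proof -
  obtain U where U: "maximal U (\<lambda>X. X \<subseteq> S \<and> lin_indpt X)"
    using maxU_exists[OF assms(1,2), of "{}"] li_empty by auto
  have US: "U \<subseteq> S" "lin_indpt U" using U unfolding maximal_def by auto
  have fU: "finite U" using US assms(1) finite_subset by blast
  have sub: "submodule class_ring (span T) V" using span_is_submodule assms by auto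
  have vs: "vectorspace class_ring (vs (span T))"
    using assms span_is_subspace subspace_def subspace_is_vs by simp
  have UT: "U \<subseteq> span T" using US assms(5) by auto
  have fd: "vectorspace.fin_dim class_ring (vs (span T))" using fin_dim_span[of T] assms by simp
  have li: "LinearCombinations.module.lin_indpt class_ring (vs (span T)) U"
    using span_li_not_depend(2)[OF UT sub] US by simp
  have "card U \<ge> vectorspace.dim class_ring (vs (span T))"
    using sr_card[OF assms(1,2) U] assms(6) unfolding sr_def by simp
  then have "vectorspace.basis class_ring (vs (span T)) U"
    using vectorspace.dim_li_is_basis[OF vs fd fU _ li] UT by auto
  then have "LinearCombinations.module.span class_ring (vs (span T)) U = span T"
    using vectorspace.basis_def[OF vs] by auto
  then have "span U = span T" using span_li_not_depend(1)[OF UT sub] by simp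
  moreover have "span U \<subseteq> span S" using span_is_monotone US by auto
  ultimately show ?thesis by simp
qed

lemma sr_le_n:
  assumes "finite S" "S \<subseteq> carrier_vec n"
  shows "sr S \<le> n"
proof -
  obtain U where U: "maximal U (\<lambda>X. X \<subseteq> S \<and> lin_indpt X)"
    using maxU_exists[OF assms(1,2), of "{}"] li_empty by auto
  have US: "U \<subseteq> S" "lin_indpt U" using U unfolding maximal_def by auto
  then have "card U \<le> dim" using li_le_dim[OF fin_dim, of U] assms by auto
  then show ?thesis using sr_card[OF assms U] dim_is_n by simp
qed

lemma sr_union_le:
  assumes "finite S" "S \<subseteq> carrier_vec n" "finite T" "T \<subseteq> carrier_vec n"
  shows "sr (S \<union> T) \<le> sr S + card T"
proof -
  have f: "finite (S \<union> T)" "S \<union> T \<subseteq> carrier_vec n" using assms by auto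
  obtain U where U: "maximal U (\<lambda>X. X \<subseteq> S \<union> T \<and> lin_indpt X)"
    using maxU_exists[OF f, of "{}"] li_empty by auto
  have US: "U \<subseteq> S \<union> T" "lin_indpt U" using U unfolding maximal_def by auto
  have "lin_indpt (U \<inter> S)" using US subset_li_is_li by blast
  then obtain U' where U': "maximal U' (\<lambda>X. X \<subseteq> S \<and> lin_indpt X)" "U \<inter> S \<subseteq> U'"
    using maxU_exists[OF assms(1,2), of "U \<inter> S"] by auto
  have "U' \<subseteq> S" using U' unfolding maximal_def by auto
  then have fU': "finite U'" using assms(1) finite_subset by blast
  have "card (U \<inter> S) \<le> card U'" using card_mono[OF fU' U'(2)] .
  moreover have "card (U - S) \<le> card T" using US assms(3) by (intro card_mono) auto
  moreover have "card U \<le> card (U \<inter> S) + card (U - S)"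
    using US f(1) finite_subset card_Un_le[of "U \<inter> S" "U - S"] by (metis Int_Diff_Un)
  ultimately show ?thesis using sr_card[OF f U] sr_card[OF assms(1,2) U'(1)] by simp
qed

end

context vec_space begin
lemma submoduleI':
  assumes "P \<subseteq> carrier_vec n" "0\<^sub>v n \<in> P" "\<And>v w. v\<in>P \<Longrightarrow> w\<in>P \<Longrightarrow> v + w \<in> P"
    "\<And>c v. v \<in> P \<Longrightarrow> c \<cdot>\<^sub>v v \<in> P"
  shows "submodule class_ring P V"
  unfolding submodule_def using assms vec_module by auto

lemma span_add_closed: "S \<subseteq> carrier_vec n \<Longrightarrow> v \<in> span S \<Longrightarrow> w \<in> span S \<Longrightarrow> v + w \<in> span S"
  using span_is_submodule[of S] submodule.m_closed by force
lemma span_smult_closed: "S \<subseteq> carrier_vec n \<Longrightarrow> v \<in> span S \<Longrightarrow> c \<cdot>\<^sub>v v \<in> span S"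
  using span_is_submodule[of S] submodule.smult_closed by force
lemma span_zero_in: "S \<subseteq> carrier_vec n \<Longrightarrow> 0\<^sub>v n \<in> span S"
  using span_is_submodule[of S] submodule.zero_closed by force
lemma span_carrier: "S \<subseteq> carrier_vec n \<Longrightarrow> span S \<subseteq> carrier_vec n"
  using span_is_submodule[of S] submodule.subset by force
end

abbreviation spn :: "nat \<Rightarrow> real vec set \<Rightarrow> real vec set" where
  "spn n S \<equiv> LinearCombinations.module.span class_ring (module_vec TYPE(real) n) S"


lemma mult_span:
  assumes M: "M \<in> carrier_mat r n" and S: "S \<subseteq> carrier_vec n" and x: "x \<in> spn n S"
  shows "M *\<^sub>v x \<in> spn r ((*\<^sub>v) M ` S)"
proof -
  interpret N: vec_space "TYPE(real)" n .
  interpret R: vec_space "TYPE(real)" r .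
  have MS: "(*\<^sub>v) M ` S \<subseteq> carrier_vec r" using M S by auto
  let ?P = "{x \<in> carrier_vec n. M *\<^sub>v x \<in> spn r ((*\<^sub>v) M ` S)}"
  have "submodule class_ring ?P N.V"
  proof (rule N.submoduleI')
    have "M *\<^sub>v 0\<^sub>v n = 0\<^sub>v r" using M by (intro eq_vecI) (auto simp: scalar_prod_def)
    then show "0\<^sub>v n \<in> ?P" using R.span_zero_in[OF MS] M by auto
    show "v + w \<in> ?P" if "v \<in> ?P" "w \<in> ?P" for v w
      using that R.span_add_closed[OF MS] M by (auto simp: mult_add_distrib_mat_vec)
    show "c \<cdot>\<^sub>v v \<in> ?P" if "v \<in> ?P" for c v
      using that R.span_smult_closed[OF MS] M by (auto simp: mult_mat_vec)
  qed auto
  moreover have "S \<subseteq> ?P" using S M R.span_mem[OF MS] by auto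
  ultimately have "spn n S \<subseteq> ?P" using N.span_is_subset by blast
  then show ?thesis using x by auto
qed


lemma set_cols_eq: "set (cols A) = (\<lambda>j. col A j) ` {..<dim_col A}"
  unfolding cols_def by auto

lemma cols_mult_set:
  assumes "M \<in> carrier_mat r n" "X \<in> carrier_mat n k"
  shows "set (cols (M * X)) = (*\<^sub>v) M ` set (cols X)"
proof -
  have "set (cols (M * X)) = (\<lambda>j. col (M*X) j) ` {..<k}" using assms unfolding set_cols_eq by auto
  also have "\<dots> = (\<lambda>j. M *\<^sub>v col X j) ` {..<k}" using assms by (intro image_cong) auto
  also have "\<dots> = (*\<^sub>v) M ` set (cols X)" using assms unfolding set_cols_eq by auto
  finally show ?thesis .
qed

lemma pow_mat_carrier[simp]: "A \<in> carrier_mat N N \<Longrightarrow> A ^\<^sub>m k \<in> carrier_mat N N"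
  by (induction k) auto

lemma pow_mat_Suc_left: "A \<in> carrier_mat N N \<Longrightarrow> A ^\<^sub>m Suc k = A * A ^\<^sub>m k"
proof (induction k)
  case 0 then show ?case by auto
next
  case (Suc k)
  have "A ^\<^sub>m Suc (Suc k) = (A * A ^\<^sub>m k) * A" using Suc by simp
  also have "\<dots> = A * (A ^\<^sub>m k * A)" using Suc by (intro assoc_mult_mat) auto
  finally show ?case by simp
qed

lemma pow_mat_vec_carrier[simp]: "A \<in> carrier_mat N N \<Longrightarrow> v \<in> carrier_vec N \<Longrightarrow> A ^\<^sub>m t *\<^sub>v v \<in> carrier_vec N"
  by (metis mult_mat_vec_carrier pow_mat_carrier)

lemma pow_Suc_vec: "A \<in> carrier_mat N N \<Longrightarrow> v \<in> carrier_vec N \<Longrightarrow> A ^\<^sub>m Suc t *\<^sub>v v = A *\<^sub>v (A ^\<^sub>m t *\<^sub>v v)"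
  using pow_mat_Suc_left[of A N t] assoc_mult_mat_vec[of A N N "A ^\<^sub>m t" N v] by simp

lemma pow_mat_add: "A \<in> carrier_mat N N \<Longrightarrow> A ^\<^sub>m (p + q) = A ^\<^sub>m p * A ^\<^sub>m q"
proof (induction q)
  case 0 then show ?case by auto
next
  case (Suc q)
  have "A ^\<^sub>m (p + Suc q) = (A ^\<^sub>m p * A ^\<^sub>m q) * A" using Suc by simp
  also have "\<dots> = A ^\<^sub>m p * (A ^\<^sub>m q * A)" using Suc by (intro assoc_mult_mat) auto
  finally show ?case by simp
qed

lemma pow_mat_vec_add: "A \<in> carrier_mat N N \<Longrightarrow> v \<in> carrier_vec N \<Longrightarrow>
   A ^\<^sub>m (p + q) *\<^sub>v v = A ^\<^sub>m p *\<^sub>v (A ^\<^sub>m q *\<^sub>v v)"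
  using pow_mat_add[of A N p q] assoc_mult_mat_vec[of "A ^\<^sub>m p" N N "A ^\<^sub>m q" N v] by simp

lemma mult_unit_vec_col: "(M :: real mat) \<in> carrier_mat r k \<Longrightarrow> j < k \<Longrightarrow> M *\<^sub>v unit_vec k j = col M j"
proof (intro eq_vecI)
  fix i assume "M \<in> carrier_mat r k" "j < k" "i < dim_vec (col M j)"
  moreover have "(\<Sum>ia = 0..<k. M $$ (i, ia) * (if ia = j then 1 else 0)) = (\<Sum>ia = 0..<k. if ia = j then M $$ (i,ia) else 0)"
    by (rule sum.cong) auto
  ultimately show "(M *\<^sub>v unit_vec k j) $ i = col M j $ i" by (simp add: scalar_prod_def unit_vec_def)
qed auto


abbreviation srk :: "nat \<Rightarrow> real vec set \<Rightarrow> nat" where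
  "srk n S \<equiv> vec_space.sr n S"

lemma rk_srk: "rk n M = srk n (set (cols M))"
  unfolding vec_space.rank_def vec_space.sr_def by simp

lemma span_own: "X \<subseteq> carrier_vec n \<Longrightarrow> X \<subseteq> spn n X"
proof -
  interpret N: vec_space "TYPE(real)" n .
  show "X \<subseteq> carrier_vec n \<Longrightarrow> X \<subseteq> spn n X" using N.in_own_span by simp
qed

lemma span_trans: assumes "X \<subseteq> spn n Y" "Y \<subseteq> spn n Z" "Z \<subseteq> carrier_vec n"
  shows "X \<subseteq> spn n Z"
proof -
  interpret N: vec_space "TYPE(real)" n .
  have "spn n Y \<subseteq> spn n Z" using N.span_is_subset[OF assms(2)] N.span_is_submodule[OF assms(3)] by simp
  then show ?thesis using assms(1) by auto
qed

lemma span_carrier': "Z \<subseteq> carrier_vec n \<Longrightarrow> spn n Z \<subseteq> carrier_vec n"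
  using vec_space.span_carrier by blast

lemma span_mono': "X \<subseteq> Y \<Longrightarrow> spn n X \<subseteq> spn n Y"
proof -
  interpret N: vec_space "TYPE(real)" n .
  show "X \<subseteq> Y \<Longrightarrow> spn n X \<subseteq> spn n Y" using N.span_is_monotone by simp
qed

lemma image_span: assumes "M \<in> carrier_mat r n" "S' \<subseteq> carrier_vec n" "S \<subseteq> spn n S'"
  shows "(*\<^sub>v) M ` S \<subseteq> spn r ((*\<^sub>v) M ` S')"
  using mult_span[OF assms(1,2)] assms(3) by auto

lemma rank_quot:
  assumes M: "M \<in> carrier_mat r n" and X: "finite X" "X \<subseteq> carrier_vec n"
    and Y: "finite Y" "Y \<subseteq> carrier_vec n" and YX: "Y \<subseteq> spn n X"
  shows "srk r ((*\<^sub>v) M ` X) + srk n Y \<le> srk r ((*\<^sub>v) M ` Y) + srk n X"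
proof -
  interpret N: vec_space "TYPE(real)" n .
  interpret R: vec_space "TYPE(real)" r .
  have XY: "finite (X \<union> Y)" "X \<union> Y \<subseteq> carrier_vec n" using X Y by auto
  obtain J0 where J0: "maximal J0 (\<lambda>T. T \<subseteq> Y \<and> N.lin_indpt T)"
    using N.maxU_exists[OF Y, of "{}"] N.li_empty by auto
  have J0Y: "J0 \<subseteq> Y" "N.lin_indpt J0" using J0 unfolding maximal_def by auto
  obtain J where J: "maximal J (\<lambda>T. T \<subseteq> X \<union> Y \<and> N.lin_indpt T)" "J0 \<subseteq> J"
    using N.maxU_exists[OF XY, of J0] J0Y by auto
  have JXY: "J \<subseteq> X \<union> Y" using J unfolding maximal_def by auto
  have fJ: "finite J" using JXY XY finite_subset by blast
  have fJ0: "finite J0" using J0Y Y finite_subset by blast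
  have c0: "srk n Y = card J0" using N.sr_card[OF Y J0] .
  have c1: "srk n (X \<union> Y) = card J" using N.sr_card[OF XY J(1)] .
  have "X \<union> Y \<subseteq> spn n X" using span_own[OF X(2)] YX by auto
  then have c2: "srk n (X \<union> Y) \<le> srk n X" using N.sr_mono[OF XY X] by simp
  have XJ: "X \<subseteq> spn n J" using N.maxU_span[OF XY(2) J(1)] by auto
  have Jc: "J \<subseteq> carrier_vec n" using JXY XY by auto
  have MJ: "(*\<^sub>v) M ` X \<subseteq> spn r ((*\<^sub>v) M ` J)" using image_span[OF M Jc XJ] .
  have cM: "\<And>Z. Z \<subseteq> carrier_vec n \<Longrightarrow> (*\<^sub>v) M ` Z \<subseteq> carrier_vec r" using M by auto
  have d1: "srk r ((*\<^sub>v) M ` X) \<le> srk r ((*\<^sub>v) M ` J)"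
    using R.sr_mono[OF _ cM[OF X(2)] _ cM[OF Jc] MJ] X fJ by simp
  have eqJ: "(*\<^sub>v) M ` J = (*\<^sub>v) M ` J0 \<union> (*\<^sub>v) M ` (J - J0)" using J(2) by auto
  have "srk r ((*\<^sub>v) M ` J0 \<union> (*\<^sub>v) M ` (J - J0)) \<le> srk r ((*\<^sub>v) M ` J0) + card ((*\<^sub>v) M ` (J - J0))"
    using R.sr_union_le[of "(*\<^sub>v) M ` J0" "(*\<^sub>v) M ` (J - J0)"] fJ fJ0 cM Jc J(2) by auto
  then have "srk r ((*\<^sub>v) M ` J) \<le> srk r ((*\<^sub>v) M ` J0) + card ((*\<^sub>v) M ` (J - J0))"
    using eqJ by simp
  moreover have "card ((*\<^sub>v) M ` (J - J0)) \<le> card (J - J0)" using card_image_le fJ by blast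
  moreover have "card (J - J0) = card J - card J0" using card_Diff_subset[OF fJ0 J(2)] .
  moreover have "card J0 \<le> card J" using card_mono[OF fJ J(2)] .
  moreover have "srk r ((*\<^sub>v) M ` J0) \<le> srk r ((*\<^sub>v) M ` Y)"
    using R.sr_mono[of "(*\<^sub>v) M ` J0" "(*\<^sub>v) M ` Y"] fJ0 Y cM J0Y R.in_own_span[OF cM[OF Y(2)]] by force
  ultimately show ?thesis using d1 c0 c1 c2 by linarith
qed


lemma chain_prop:
  assumes step: "\<And>T. P T = P (Suc T) \<Longrightarrow> P (Suc T) = P (Suc (Suc T))"
    and eq: "P T = P (Suc T)"
  shows "P (T + d) = P (Suc (T + d))"
  by (induction d) (use eq step in auto)

lemma chain_eq_const:
  assumes step: "\<And>T. P T = P (Suc T) \<Longrightarrow> P (Suc T) = P (Suc (Suc T))"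
    and eq: "P T = P (Suc T)"
  shows "P (T + d) = P T"
proof (induction d)
  case (Suc d) then show ?case using chain_prop[OF step eq, of d] by simp
qed simp

lemma chain_stab_inc:
  fixes P :: "nat \<Rightarrow> 'a set" and f :: "nat \<Rightarrow> nat"
  assumes strict: "\<And>T. P T \<noteq> P (Suc T) \<Longrightarrow> f T < f (Suc T)"
    and step: "\<And>T. P T = P (Suc T) \<Longrightarrow> P (Suc T) = P (Suc (Suc T))"
    and bnd: "\<And>T. f T \<le> N" and mono: "\<And>T. f T \<le> f (Suc T)"
  shows "P N = P (Suc N)"
proof (rule ccontr)
  assume ne: "P N \<noteq> P (Suc N)"
  have all: "P T \<noteq> P (Suc T)" if "T \<le> N" for T
  proof
    assume "P T = P (Suc T)"
    from chain_prop[OF step this, of "N - T"] that ne show False by simp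
  qed
  have "T \<le> f T" if "T \<le> Suc N" for T
    using that
  proof (induction T)
    case (Suc T)
    then have "f T < f (Suc T)" using strict all by auto
    then show ?case using Suc by auto
  qed simp
  then have "Suc N \<le> f (Suc N)" by simp
  then show False using bnd[of "Suc N"] by simp
qed

lemma chain_stab_dec:
  fixes P :: "nat \<Rightarrow> 'a set" and f :: "nat \<Rightarrow> nat"
  assumes strict: "\<And>T. P T \<noteq> P (Suc T) \<Longrightarrow> f (Suc T) < f T"
    and step: "\<And>T. P T = P (Suc T) \<Longrightarrow> P (Suc T) = P (Suc (Suc T))"
    and bnd: "f 0 \<le> N"
  shows "P N = P (Suc N)"
proof (rule ccontr)
  assume ne: "P N \<noteq> P (Suc N)"
  have all: "P T \<noteq> P (Suc T)" if "T \<le> N" for T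
  proof
    assume "P T = P (Suc T)"
    from chain_prop[OF step this, of "N - T"] that ne show False by simp
  qed
  have "f T + T \<le> f 0" if "T \<le> Suc N" for T
    using that
  proof (induction T)
    case (Suc T)
    then have "f (Suc T) < f T" using strict all by auto
    then show ?case using Suc by auto
  qed simp
  then have "f (Suc N) + Suc N \<le> f 0" by blast
  then show False using bnd by simp
qed

definition kry :: "real mat \<Rightarrow> real vec set \<Rightarrow> nat \<Rightarrow> real vec set" where
  "kry A G T = (\<lambda>(t, g). A ^\<^sub>m t *\<^sub>v g) ` ({..<T} \<times> G)"

lemma kry_finite: "finite G \<Longrightarrow> finite (kry A G T)"
  unfolding kry_def by auto

lemma kry_carrier: "A \<in> carrier_mat N N \<Longrightarrow> G \<subseteq> carrier_vec N \<Longrightarrow> kry A G T \<subseteq> carrier_vec N"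
  unfolding kry_def by (auto intro!: pow_mat_vec_carrier)

lemma kry_mono: "T \<le> T' \<Longrightarrow> kry A G T \<subseteq> kry A G T'"
  unfolding kry_def by auto

lemma kry_Suc:
  assumes A: "A \<in> carrier_mat N N" and G: "G \<subseteq> carrier_vec N"
  shows "kry A G (Suc T) = G \<union> (*\<^sub>v) A ` kry A G T"
proof
  show "kry A G (Suc T) \<subseteq> G \<union> (*\<^sub>v) A ` kry A G T"
  proof
    fix x assume "x \<in> kry A G (Suc T)"
    then obtain t g where tg: "t < Suc T" "g \<in> G" "x = A ^\<^sub>m t *\<^sub>v g" unfolding kry_def by auto
    show "x \<in> G \<union> (*\<^sub>v) A ` kry A G T"
    proof (cases t)
      case 0 then show ?thesis using tg G A by auto
    next
      case (Suc t')
      have "x = A *\<^sub>v (A ^\<^sub>m t' *\<^sub>v g)" using tg Suc A G pow_Suc_vec[OF A, of g t'] by auto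
      moreover have "A ^\<^sub>m t' *\<^sub>v g \<in> kry A G T" using tg Suc unfolding kry_def by auto
      ultimately show ?thesis by auto
    qed
  qed
  show "G \<union> (*\<^sub>v) A ` kry A G T \<subseteq> kry A G (Suc T)"
  proof
    fix x assume "x \<in> G \<union> (*\<^sub>v) A ` kry A G T"
    then consider "x \<in> G" | t g where "t < T" "g \<in> G" "x = A *\<^sub>v (A ^\<^sub>m t *\<^sub>v g)"
      unfolding kry_def by auto
    then show "x \<in> kry A G (Suc T)"
    proof cases
      case 1
      then have "x = A ^\<^sub>m 0 *\<^sub>v x" using A G by auto
      then show ?thesis using 1 unfolding kry_def by (intro image_eqI[of _ _ "(0, x)"]) auto
    next
      case 2
      then have "x = A ^\<^sub>m (Suc t) *\<^sub>v g" using A G pow_Suc_vec[OF A, of g t] by auto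
      then show ?thesis using 2 unfolding kry_def by (intro image_eqI[of _ _ "(Suc t, g)"]) auto
    qed
  qed
qed

lemma kry_inv:
  assumes A: "A \<in> carrier_mat N N" and G: "finite G" "G \<subseteq> carrier_vec N"
  shows "(*\<^sub>v) A ` kry A G N \<subseteq> spn N (kry A G N)"
proof -
  interpret NN: vec_space "TYPE(real)" N .
  define P where "P T = spn N (kry A G T)" for T
  have kc: "\<And>T. kry A G T \<subseteq> carrier_vec N" using kry_carrier A G by auto
  have kf: "\<And>T. finite (kry A G T)" using kry_finite G by auto
  have mono: "P T \<subseteq> P (Suc T)" for T unfolding P_def by (intro span_mono' kry_mono) auto
  have step: "P (Suc T) = P (Suc (Suc T))" if "P T = P (Suc T)" for T
  proof -
    have "kry A G (Suc T) \<subseteq> spn N (kry A G T)" using span_own[OF kc] that unfolding P_def by blast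
    then have "(*\<^sub>v) A ` kry A G (Suc T) \<subseteq> spn N ((*\<^sub>v) A ` kry A G T)"
      using image_span[OF A kc] by blast
    also have "\<dots> \<subseteq> spn N (kry A G (Suc T))" using kry_Suc[OF A G(2), of T] by (intro span_mono') auto
    finally have "kry A G (Suc (Suc T)) \<subseteq> spn N (kry A G (Suc T))"
      using kry_Suc[OF A G(2), of "Suc T"] span_own[OF kc, of "Suc T"] kry_Suc[OF A G(2), of T] by auto
    then have "P (Suc (Suc T)) \<subseteq> P (Suc T)" unfolding P_def
      using NN.span_is_subset NN.span_is_submodule[OF kc] by simp
    then show ?thesis using mono by auto
  qed
  have strict: "srk N (kry A G T) < srk N (kry A G (Suc T))" if "P T \<noteq> P (Suc T)" for T
  proof -
    have sub: "kry A G T \<subseteq> spn N (kry A G (Suc T))" using kry_mono[of T "Suc T" A G] span_own[OF kc, of "Suc T"] by auto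
    have le: "srk N (kry A G T) \<le> srk N (kry A G (Suc T))" using NN.sr_mono[OF kf kc kf kc sub] .
    show ?thesis
    proof (rule ccontr)
      assume "\<not> ?thesis"
      then have "srk N (kry A G (Suc T)) \<le> srk N (kry A G T)" by simp
      then have "P (Suc T) \<subseteq> P T" using NN.sr_eq_span[OF kf kc kf kc sub] unfolding P_def by simp
      then show False using that mono by auto
    qed
  qed
  have monof: "srk N (kry A G T) \<le> srk N (kry A G (Suc T))" for T
    using kry_mono[of T "Suc T"] span_own[OF kc] NN.sr_mono[OF kf kc kf kc] by (meson le_SucI order_refl subset_trans)
  have "P N = P (Suc N)"
    by (rule chain_stab_inc[of P "\<lambda>T. srk N (kry A G T)"]) (use strict step monof NN.sr_le_n[OF kf kc] in auto)
  then have "kry A G (Suc N) \<subseteq> P N" using span_own[OF kc, of "Suc N"] unfolding P_def by auto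
  then show ?thesis using kry_Suc[OF A G(2), of N] unfolding P_def by auto
qed

lemma pow_image_stab:
  assumes A: "A \<in> carrier_mat N N" and S: "finite S" "S \<subseteq> carrier_vec N"
    and inv: "(*\<^sub>v) A ` S \<subseteq> spn N S"
  shows "spn N ((\<lambda>v. A ^\<^sub>m (N + p) *\<^sub>v v) ` S) = spn N ((\<lambda>v. A ^\<^sub>m N *\<^sub>v v) ` S)"
proof -
  interpret NN: vec_space "TYPE(real)" N .
  define Q where "Q T = spn N ((\<lambda>v. A ^\<^sub>m T *\<^sub>v v) ` S)" for T
  have kc: "\<And>T. (\<lambda>v. A ^\<^sub>m T *\<^sub>v v) ` S \<subseteq> carrier_vec N" using A S by (auto intro!: pow_mat_vec_carrier)
  have kf: "\<And>T. finite ((\<lambda>v. A ^\<^sub>m T *\<^sub>v v) ` S)" using S by auto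
  have img: "(\<lambda>v. A ^\<^sub>m Suc T *\<^sub>v v) ` S = (*\<^sub>v) A ` ((\<lambda>v. A ^\<^sub>m T *\<^sub>v v) ` S)" for T
    using pow_Suc_vec[OF A] A S by (auto simp: image_image intro!: image_cong)
  have img2: "(\<lambda>v. A ^\<^sub>m Suc T *\<^sub>v v) ` S = (\<lambda>v. A ^\<^sub>m T *\<^sub>v v) ` ((*\<^sub>v) A ` S)" for T
    unfolding image_image using A S assoc_mult_mat_vec[of "A ^\<^sub>m T" N N A N] by (auto intro!: image_cong)
  have sub1: "(\<lambda>v. A ^\<^sub>m Suc T *\<^sub>v v) ` S \<subseteq> Q T" for T
  proof -
    have "(\<lambda>v. A ^\<^sub>m T *\<^sub>v v) ` ((*\<^sub>v) A ` S) \<subseteq> Q T"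
      using image_span[OF pow_mat_carrier[OF A, of T] S(2) inv] unfolding Q_def by (simp add: image_image)
    then show ?thesis using img2 by simp
  qed
  have mono: "Q (Suc T) \<subseteq> Q T" for T
    using sub1[of T] NN.span_is_subset NN.span_is_submodule[OF kc] unfolding Q_def by simp
  have step: "Q (Suc T) = Q (Suc (Suc T))" if "Q T = Q (Suc T)" for T
  proof -
    have "(\<lambda>v. A ^\<^sub>m T *\<^sub>v v) ` S \<subseteq> spn N ((\<lambda>v. A ^\<^sub>m Suc T *\<^sub>v v) ` S)"
      using span_own[OF kc, of T] that unfolding Q_def by auto
    then have "(*\<^sub>v) A ` ((\<lambda>v. A ^\<^sub>m T *\<^sub>v v) ` S) \<subseteq> spn N ((*\<^sub>v) A ` ((\<lambda>v. A ^\<^sub>m Suc T *\<^sub>v v) ` S))"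
      using image_span[OF A kc] by blast
    then have "(\<lambda>v. A ^\<^sub>m Suc T *\<^sub>v v) ` S \<subseteq> Q (Suc (Suc T))"
      unfolding Q_def img[symmetric] by simp
    then have "Q (Suc T) \<subseteq> Q (Suc (Suc T))"
      unfolding Q_def using NN.span_is_subset NN.span_is_submodule[OF kc] by blast
    then show ?thesis using mono[of "Suc T"] by auto
  qed
  have strict: "srk N ((\<lambda>v. A ^\<^sub>m Suc T *\<^sub>v v) ` S) < srk N ((\<lambda>v. A ^\<^sub>m T *\<^sub>v v) ` S)"
    if "Q T \<noteq> Q (Suc T)" for T
  proof -
    have sub: "(\<lambda>v. A ^\<^sub>m Suc T *\<^sub>v v) ` S \<subseteq> spn N ((\<lambda>v. A ^\<^sub>m T *\<^sub>v v) ` S)"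
      using sub1 unfolding Q_def by auto
    have le: "srk N ((\<lambda>v. A ^\<^sub>m Suc T *\<^sub>v v) ` S) \<le> srk N ((\<lambda>v. A ^\<^sub>m T *\<^sub>v v) ` S)"
      using NN.sr_mono[OF kf kc kf kc sub] .
    show ?thesis
    proof (rule ccontr)
      assume "\<not> ?thesis"
      then have "srk N ((\<lambda>v. A ^\<^sub>m T *\<^sub>v v) ` S) \<le> srk N ((\<lambda>v. A ^\<^sub>m Suc T *\<^sub>v v) ` S)" by simp
      then have "Q T \<subseteq> Q (Suc T)" using NN.sr_eq_span[OF kf kc kf kc sub] unfolding Q_def by simp
      then show False using that mono by auto
    qed
  qed
  have "Q N = Q (Suc N)"
    by (rule chain_stab_dec[of Q "\<lambda>T. srk N ((\<lambda>v. A ^\<^sub>m T *\<^sub>v v) ` S)"])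
      (use strict step NN.sr_le_n[OF kf kc, of 0] in \<open>auto simp del: pow_mat.simps\<close>)
  from chain_eq_const[of Q, OF step this, of p] show ?thesis unfolding Q_def by simp
qed


lemma ctrb_carrier: "A \<in> carrier_mat N N \<Longrightarrow> B \<in> carrier_mat N m \<Longrightarrow> ctrb_mat A B \<in> carrier_mat N (N * m)"
  unfolding ctrb_mat_def Let_def by auto

lemma ctrb_col:
  assumes A: "A \<in> carrier_mat N N" and B: "B \<in> carrier_mat N m" and j: "j < N * m"
  shows "col (ctrb_mat A B) j = A ^\<^sub>m (N - 1 - j div m) *\<^sub>v col B (j mod m)"
proof -
  have m: "0 < m" using j by (cases m) auto
  have jm: "j mod m < m" using m by simp
  show ?thesis
  proof (rule eq_vecI)
    fix i assume "i < dim_vec (A ^\<^sub>m (N - 1 - j div m) *\<^sub>v col B (j mod m))"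
    then have i: "i < N" using A by simp
    have "col (ctrb_mat A B) j $ i = (A ^\<^sub>m (N - 1 - j div m) * B) $$ (i, j mod m)"
      using A B i j unfolding ctrb_mat_def Let_def by simp
    also have "\<dots> = row (A ^\<^sub>m (N - 1 - j div m)) i \<bullet> col B (j mod m)"
      using A B i jm by (intro index_mult_mat) auto
    also have "\<dots> = (A ^\<^sub>m (N - 1 - j div m) *\<^sub>v col B (j mod m)) $ i"
      using A B i by simp
    finally show "col (ctrb_mat A B) j $ i = (A ^\<^sub>m (N - 1 - j div m) *\<^sub>v col B (j mod m)) $ i" .
  qed (use A B j in \<open>auto simp: ctrb_mat_def Let_def\<close>)
qed

lemma ctrb_cols:
  assumes A: "A \<in> carrier_mat N N" and B: "B \<in> carrier_mat N m"
  shows "set (cols (ctrb_mat A B)) = kry A (set (cols B)) N"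
proof -
  have W: "ctrb_mat A B \<in> carrier_mat N (N * m)" using ctrb_carrier[OF A B] .
  have "set (cols (ctrb_mat A B)) = (\<lambda>j. col (ctrb_mat A B) j) ` {..<N*m}" using W unfolding set_cols_eq by simp
  also have "\<dots> = (\<lambda>j. A ^\<^sub>m (N - 1 - j div m) *\<^sub>v col B (j mod m)) ` {..<N*m}"
    using ctrb_col[OF A B] by (intro image_cong) auto
  also have "\<dots> = kry A (set (cols B)) N"
  proof
    show "(\<lambda>j. A ^\<^sub>m (N - 1 - j div m) *\<^sub>v col B (j mod m)) ` {..<N*m} \<subseteq> kry A (set (cols B)) N"
    proof
      fix x assume "x \<in> (\<lambda>j. A ^\<^sub>m (N - 1 - j div m) *\<^sub>v col B (j mod m)) ` {..<N*m}"
      then obtain j where j: "j < N * m" "x = A ^\<^sub>m (N - 1 - j div m) *\<^sub>v col B (j mod m)" by auto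
      have m: "0 < m" using j by (cases m) auto
      have N: "0 < N" using j by (cases N) auto
      have "col B (j mod m) \<in> set (cols B)" using B m unfolding set_cols_eq by auto
      moreover have "N - 1 - j div m < N" using N by simp
      ultimately show "x \<in> kry A (set (cols B)) N" unfolding kry_def using j
        by (intro image_eqI[of _ _ "(N - 1 - j div m, col B (j mod m))"]) auto
    qed
    show "kry A (set (cols B)) N \<subseteq> (\<lambda>j. A ^\<^sub>m (N - 1 - j div m) *\<^sub>v col B (j mod m)) ` {..<N*m}"
    proof
      fix x assume "x \<in> kry A (set (cols B)) N"
      then obtain t r where tr: "t < N" "r < m" "x = A ^\<^sub>m t *\<^sub>v col B r"
        using B unfolding kry_def set_cols_eq by auto
      define j where "j = (N - 1 - t) * m + r"
      have jd: "j div m = N - 1 - t" "j mod m = r" using tr unfolding j_def by auto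
      have "j < N * m"
      proof -
        have "(N - 1 - t) * m + r < (N - 1 - t) * m + m" using tr by simp
        also have "\<dots> = (N - t) * m"
        proof -
          obtain k where k: "N - t = Suc k" using tr by (cases "N - t") auto
          then have "N - 1 - t = k" by simp
          then show ?thesis using k by simp
        qed
        also have "\<dots> \<le> N * m" by (intro mult_le_mono1) auto
        finally show ?thesis unfolding j_def .
      qed
      moreover have "N - 1 - j div m = t" using jd tr by simp
      ultimately show "x \<in> (\<lambda>j. A ^\<^sub>m (N - 1 - j div m) *\<^sub>v col B (j mod m)) ` {..<N*m}"
        using tr jd by (intro image_eqI[of _ _ j]) auto
    qed
  qed
  finally show ?thesis .
qed

lemma part1:
  fixes A B C :: "real mat"
  assumes A: "A \<in> carrier_mat N N" and B: "B \<in> carrier_mat N m" and C: "C \<in> carrier_mat n N"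
  shows "R_idx A B C i \<le> int (rk N (ctrb_mat A B)) - int (rk N (A * ctrb_mat A B))"
    and "int (rk N (ctrb_mat A B)) - int (rk N (A * ctrb_mat A B)) \<le> int N - int (rk N A)"
proof -
  define W where "W = ctrb_mat A B"
  have W: "W \<in> carrier_mat N (N * m)" unfolding W_def using ctrb_carrier[OF A B] .
  define X where "X = set (cols W)"
  have X: "finite X" "X \<subseteq> carrier_vec N" unfolding X_def using cols_dim[of W] carrier_matD(1)[OF W] by auto
  have XK: "X = kry A (set (cols B)) N" unfolding X_def W_def using ctrb_cols[OF A B] .
  have Bf: "finite (set (cols B))" "set (cols B) \<subseteq> carrier_vec N" using cols_dim[of B] carrier_matD(1)[OF B] by auto
  have AX: "(*\<^sub>v) A ` X \<subseteq> spn N X" using kry_inv[OF A Bf] XK by simp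
  have AXc: "finite ((*\<^sub>v) A ` X)" "(*\<^sub>v) A ` X \<subseteq> carrier_vec N" using X A by auto
  have rW: "rk N W = srk N X" unfolding X_def rk_srk ..
  have rAW: "rk N (A * W) = srk N ((*\<^sub>v) A ` X)" unfolding rk_srk X_def using cols_mult_set[OF A W] by simp
  define M where "M = C * A ^\<^sub>m i"
  have M: "M \<in> carrier_mat n N" unfolding M_def using C A by auto
  have r1: "rk n (C * A ^\<^sub>m i * W) = srk n ((*\<^sub>v) M ` X)"
    unfolding rk_srk X_def M_def using cols_mult_set[OF M[unfolded M_def] W] by simp
  have "C * A ^\<^sub>m Suc i * W = M * (A * W)"
  proof -
    have "C * A ^\<^sub>m Suc i = M * A" unfolding M_def using A C by (simp add: assoc_mult_mat[of C n N _ N A N])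
    then show ?thesis using M A W by (simp add: assoc_mult_mat[of M n N A N W])
  qed
  then have r2: "rk n (C * A ^\<^sub>m Suc i * W) = srk n ((*\<^sub>v) M ` ((*\<^sub>v) A ` X))"
    unfolding rk_srk X_def using cols_mult_set[OF M mult_carrier_mat[OF A W]] cols_mult_set[OF A W] by simp
  have q1: "srk n ((*\<^sub>v) M ` X) + srk N ((*\<^sub>v) A ` X) \<le> srk n ((*\<^sub>v) M ` ((*\<^sub>v) A ` X)) + srk N X"
    using rank_quot[OF M X AXc AX] .
  show "R_idx A B C i \<le> int (rk N (ctrb_mat A B)) - int (rk N (A * ctrb_mat A B))"
    unfolding R_idx_def using q1 r1 r2 rW rAW C unfolding W_def by simp
  define U where "U = set (unit_vecs N :: real vec list)"
  have U: "finite U" "U \<subseteq> carrier_vec N" unfolding U_def using unit_vecs_carrier by auto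
  have XU: "X \<subseteq> spn N U" unfolding U_def using vec_space.span_unit_vecs_is_carrier[of N, where ?'a = real] X by simp
  have q2: "srk N ((*\<^sub>v) A ` U) + srk N X \<le> srk N ((*\<^sub>v) A ` X) + srk N U"
    using rank_quot[OF A U X XU] .
  have "srk N U \<le> N" using vec_space.sr_le_n[OF U] .
  moreover have "(*\<^sub>v) A ` U = set (cols A)"
    unfolding U_def unit_vecs_def set_cols_eq using A mult_unit_vec_col[OF A] by (auto simp: image_image)
  ultimately show "int (rk N (ctrb_mat A B)) - int (rk N (A * ctrb_mat A B)) \<le> int N - int (rk N A)"
    using q2 rW rAW unfolding W_def rk_srk[of N A] by simp
qed


definition reach :: "real mat \<Rightarrow> real mat \<Rightarrow> nat \<Rightarrow> (nat \<Rightarrow> real vec) \<Rightarrow> real vec" where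
  "reach A B L u = finsum_vec TYPE(real) (dim_row A) (\<lambda>k. (A ^\<^sub>m (L - k)) * B *\<^sub>v u k) {1..L}"

definition adm :: "nat \<Rightarrow> (nat \<Rightarrow> nat set) \<Rightarrow> nat \<Rightarrow> (nat \<Rightarrow> real vec) \<Rightarrow> bool" where
  "adm m supp L u \<longleftrightarrow> (\<forall>k\<in>{1..L}. u k \<in> carrier_vec m \<and> (\<forall>j<m. j \<notin> supp k \<longrightarrow> u k $ j = 0))"

lemma mat_vec_zero: "M \<in> carrier_mat r k \<Longrightarrow> M *\<^sub>v 0\<^sub>v k = (0\<^sub>v r :: real vec)"
  by (intro eq_vecI) (auto simp: scalar_prod_def)

lemma reach_fun_carrier:
  assumes A: "A \<in> carrier_mat N N" and B: "B \<in> carrier_mat N m" and u: "\<forall>k\<in>{1..L}. u k \<in> carrier_vec m"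
  shows "(\<lambda>k. (A ^\<^sub>m (L - k)) * B *\<^sub>v u k) \<in> {1..L} \<rightarrow> carrier_vec N"
  using A B u by (auto intro!: mult_mat_vec_carrier[of _ N m])

lemma reach_carrier:
  assumes A: "A \<in> carrier_mat N N" and B: "B \<in> carrier_mat N m" and u: "\<forall>k\<in>{1..L}. u k \<in> carrier_vec m"
  shows "reach A B L u \<in> carrier_vec N"
  unfolding reach_def using finsum_vec_closed[OF reach_fun_carrier[OF A B u]] A by simp

lemma reach_index:
  assumes A: "A \<in> carrier_mat N N" and B: "B \<in> carrier_mat N m" and u: "\<forall>k\<in>{1..L}. u k \<in> carrier_vec m"
    and i: "i < N"
  shows "reach A B L u $ i = (\<Sum>k\<in>{1..L}. ((A ^\<^sub>m (L - k)) * B *\<^sub>v u k) $ i)"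
  unfolding reach_def using index_finsum_vec[OF _ i reach_fun_carrier[OF A B u]] A by simp

lemma reach_submodule:
  assumes A: "A \<in> carrier_mat N N" and B: "B \<in> carrier_mat N m"
  shows "submodule class_ring {reach A B L u | u. adm m supp L u} (module_vec TYPE(real) N)"
proof -
  interpret NN: vec_space "TYPE(real)" N .
  let ?R = "{reach A B L u | u. adm m supp L u}"
  have M: "\<And>k. A ^\<^sub>m (L - k) * B \<in> carrier_mat N m" using A B by auto
  show ?thesis
  proof (rule NN.submoduleI')
    show "?R \<subseteq> carrier_vec N" using reach_carrier[OF A B] unfolding adm_def by auto
    have a0: "adm m supp L (\<lambda>k. 0\<^sub>v m)" unfolding adm_def by auto
    have "reach A B L (\<lambda>k. 0\<^sub>v m) = 0\<^sub>v N"
    proof (rule eq_vecI)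
      fix i assume "i < dim_vec (0\<^sub>v N :: real vec)"
      then have i: "i < N" by simp
      have "((A ^\<^sub>m (L - k)) * B *\<^sub>v 0\<^sub>v m) $ i = 0" for k
      proof -
        have "(A ^\<^sub>m (L - k)) * B *\<^sub>v 0\<^sub>v m = 0\<^sub>v N" using M[of k] by (intro eq_vecI) (auto simp: scalar_prod_def)
        then show ?thesis using i by simp
      qed
      then show "reach A B L (\<lambda>k. 0\<^sub>v m) $ i = 0\<^sub>v N $ i" using reach_index[OF A B _ i] i by simp
    qed (use reach_carrier[OF A B] in auto)
    then show "0\<^sub>v N \<in> ?R" using a0 by force
    show "v + w \<in> ?R" if vR: "v \<in> ?R" and wR: "w \<in> ?R" for v w
    proof -
      obtain u1 where u1: "adm m supp L u1" "v = reach A B L u1" using vR by blast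
      obtain u2 where u2: "adm m supp L u2" "w = reach A B L u2" using wR by blast
      have a: "adm m supp L (\<lambda>k. u1 k + u2 k)" using u1 u2 unfolding adm_def by auto
      have c1: "\<forall>k\<in>{1..L}. u1 k \<in> carrier_vec m" and c2: "\<forall>k\<in>{1..L}. u2 k \<in> carrier_vec m"
        and c3: "\<forall>k\<in>{1..L}. u1 k + u2 k \<in> carrier_vec m" using u1 u2 unfolding adm_def by auto
      have "reach A B L (\<lambda>k. u1 k + u2 k) = v + w"
      proof (rule eq_vecI)
        fix i assume "i < dim_vec (v + w)"
        then have i: "i < N" using u1 u2 reach_carrier[OF A B c2] by simp
        have "reach A B L (\<lambda>k. u1 k + u2 k) $ i = (\<Sum>k\<in>{1..L}. ((A ^\<^sub>m (L - k)) * B *\<^sub>v u1 k) $ i + ((A ^\<^sub>m (L - k)) * B *\<^sub>v u2 k) $ i)"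
          unfolding reach_index[OF A B c3 i]
        proof (rule sum.cong)
          fix k assume k: "k \<in> {1..L}"
          have "(A ^\<^sub>m (L - k)) * B *\<^sub>v (u1 k + u2 k) = (A ^\<^sub>m (L - k)) * B *\<^sub>v u1 k + (A ^\<^sub>m (L - k)) * B *\<^sub>v u2 k"
            using mult_add_distrib_mat_vec[OF M] c1 c2 k by blast
          then show "((A ^\<^sub>m (L - k)) * B *\<^sub>v (u1 k + u2 k)) $ i = ((A ^\<^sub>m (L - k)) * B *\<^sub>v u1 k) $ i + ((A ^\<^sub>m (L - k)) * B *\<^sub>v u2 k) $ i"
            using i carrier_matD(1)[OF M[of k]] by (simp add: index_add_vec)
        qed simp
        also have "\<dots> = v $ i + w $ i" unfolding u1 u2 reach_index[OF A B c1 i] reach_index[OF A B c2 i] sum.distrib ..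
        finally show "reach A B L (\<lambda>k. u1 k + u2 k) $ i = (v + w) $ i" using i u1 u2 reach_carrier[OF A B c2] by simp
      qed (use reach_carrier[OF A B c3] u1 u2 reach_carrier[OF A B c2] in auto)
      then show ?thesis using a by force
    qed
    show "c \<cdot>\<^sub>v v \<in> ?R" if vR: "v \<in> ?R" for c v
    proof -
      obtain u1 where u1: "adm m supp L u1" "v = reach A B L u1" using vR by blast
      have a: "adm m supp L (\<lambda>k. c \<cdot>\<^sub>v u1 k)" using u1 unfolding adm_def by auto
      have c1: "\<forall>k\<in>{1..L}. u1 k \<in> carrier_vec m"
        and c3: "\<forall>k\<in>{1..L}. c \<cdot>\<^sub>v u1 k \<in> carrier_vec m" using u1 unfolding adm_def by auto
      have "reach A B L (\<lambda>k. c \<cdot>\<^sub>v u1 k) = c \<cdot>\<^sub>v v"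
      proof (rule eq_vecI)
        fix i assume "i < dim_vec (c \<cdot>\<^sub>v v)"
        then have i: "i < N" using u1 reach_carrier[OF A B c1] by simp
        have "reach A B L (\<lambda>k. c \<cdot>\<^sub>v u1 k) $ i = (\<Sum>k\<in>{1..L}. c * ((A ^\<^sub>m (L - k)) * B *\<^sub>v u1 k) $ i)"
          unfolding reach_index[OF A B c3 i]
        proof (rule sum.cong)
          fix k assume k: "k \<in> {1..L}"
          have "(A ^\<^sub>m (L - k)) * B *\<^sub>v (c \<cdot>\<^sub>v u1 k) = c \<cdot>\<^sub>v ((A ^\<^sub>m (L - k)) * B *\<^sub>v u1 k)"
            using mult_mat_vec[OF M] c1 k by blast
          then show "((A ^\<^sub>m (L - k)) * B *\<^sub>v (c \<cdot>\<^sub>v u1 k)) $ i = c * ((A ^\<^sub>m (L - k)) * B *\<^sub>v u1 k) $ i"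
            using i carrier_matD(1)[OF M[of k]] by (simp add: index_smult_vec)
        qed simp
        also have "\<dots> = c * v $ i" unfolding u1 reach_index[OF A B c1 i] sum_distrib_left ..
        finally show "reach A B L (\<lambda>k. c \<cdot>\<^sub>v u1 k) $ i = (c \<cdot>\<^sub>v v) $ i" using i u1 reach_carrier[OF A B c1] by simp
      qed (use reach_carrier[OF A B c3] u1 reach_carrier[OF A B c1] in auto)
      then show ?thesis using a by force
    qed
  qed
qed

lemma reach_gen:
  assumes A: "A \<in> carrier_mat N N" and B: "B \<in> carrier_mat N m"
    and e: "e < L" and j: "j \<in> supp (L - e)" "j < m"
  shows "A ^\<^sub>m e *\<^sub>v col B j \<in> {reach A B L u | u. adm m supp L u}"
proof -
  define u :: "nat \<Rightarrow> real vec" where "u k = (if k = L - e then unit_vec m j else 0\<^sub>v m)" for k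
  have a: "adm m supp L u" unfolding adm_def u_def using j by (auto simp: unit_vec_def)
  have c: "\<forall>k\<in>{1..L}. u k \<in> carrier_vec m" unfolding u_def by auto
  have M: "\<And>k. A ^\<^sub>m (L - k) * B \<in> carrier_mat N m" using A B by auto
  have k: "L - e \<in> {1..L}" using e by auto
  have "reach A B L u = A ^\<^sub>m e *\<^sub>v col B j"
  proof (rule eq_vecI)
    fix i assume "i < dim_vec (A ^\<^sub>m e *\<^sub>v col B j)"
    then have i: "i < N" using A by simp
    have "reach A B L u $ i = (\<Sum>k\<in>{1..L}. if k = L - e then ((A ^\<^sub>m (L - k)) * B *\<^sub>v unit_vec m j) $ i else 0)"
      unfolding reach_index[OF A B c i]
      by (rule sum.cong) (use M i mat_vec_zero[OF M] in \<open>auto simp: u_def\<close>)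
    also have "\<dots> = ((A ^\<^sub>m (L - (L - e))) * B *\<^sub>v unit_vec m j) $ i"
      using k by (simp add: sum.delta)
    also have "(A ^\<^sub>m (L - (L - e))) * B *\<^sub>v unit_vec m j = A ^\<^sub>m e *\<^sub>v col B j"
      using e mult_unit_vec_col[of "A ^\<^sub>m e * B" N m j] mult_carrier_mat[OF pow_mat_carrier[OF A, of e] B] col_mult2[of "A ^\<^sub>m e" N N B m j] A B j by simp
    finally show "reach A B L u $ i = (A ^\<^sub>m e *\<^sub>v col B j) $ i" .
  qed (use reach_carrier[OF A B c] A in auto)
  then show ?thesis using a by force
qed

lemma adm_sparse:
  assumes "adm m supp L u" "k \<in> {1..L}" "finite (supp k)" "card (supp k) \<le> s"
  shows "sparse_vec s (u k)"
proof -
  have uk: "u k \<in> carrier_vec m" "\<forall>j<m. j \<notin> supp k \<longrightarrow> u k $ j = 0" using assms(1,2) unfolding adm_def by auto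
  have "{j. j < dim_vec (u k) \<and> u k $ j \<noteq> 0} \<subseteq> supp k" using uk by auto
  then have "card {j. j < dim_vec (u k) \<and> u k $ j \<noteq> 0} \<le> card (supp k)" using assms(3) by (rule card_mono[rotated])
  then show ?thesis unfolding sparse_vec_def using assms(4) by simp
qed



lemma greedy:
  assumes A: "A \<in> carrier_mat N N" and B: "B \<in> carrier_mat N m" and N: "0 < N"
  shows "\<exists>S. S \<subseteq> {..<m} \<and> card S \<le> srk N (kry A (set (cols B)) N) - srk N ((*\<^sub>v) A ` kry A (set (cols B)) N)
     \<and> kry A (set (cols B)) N \<subseteq> spn N ((\<lambda>j. col B j) ` S \<union> (*\<^sub>v) A ` kry A (set (cols B)) N)"
proof -
  interpret NN: vec_space "TYPE(real)" N .
  define G where "G = set (cols B)"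
  define X where "X = kry A G N"
  define Y where "Y = (*\<^sub>v) A ` X"
  have Gf: "finite G" "G \<subseteq> carrier_vec N" unfolding G_def using cols_dim[of B] carrier_matD(1)[OF B] by auto
  have Xf: "finite X" "X \<subseteq> carrier_vec N" unfolding X_def using kry_finite[OF Gf(1)] kry_carrier[OF A Gf(2)] by auto
  have Yf: "finite Y" "Y \<subseteq> carrier_vec N" unfolding Y_def using Xf A by auto
  have YGf: "finite (Y \<union> G)" "Y \<union> G \<subseteq> carrier_vec N" using Yf Gf by auto
  have "kry A G 1 = G" using kry_Suc[OF A Gf(2), of 0] unfolding kry_def by simp
  then have GX: "G \<subseteq> X" unfolding X_def using kry_mono[of 1 N A G] N by simp
  have YX: "Y \<subseteq> spn N X" unfolding Y_def X_def using kry_inv[OF A Gf] .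
  have YGX: "Y \<union> G \<subseteq> spn N X" using YX GX span_own[OF Xf(2)] by auto
  obtain J0 where J0: "maximal J0 (\<lambda>T. T \<subseteq> Y \<and> NN.lin_indpt T)"
    using NN.maxU_exists[OF Yf, of "{}"] NN.li_empty by auto
  have J0Y: "J0 \<subseteq> Y" "NN.lin_indpt J0" using J0 unfolding maximal_def by auto
  obtain J where J: "maximal J (\<lambda>T. T \<subseteq> Y \<union> G \<and> NN.lin_indpt T)" "J0 \<subseteq> J"
    using NN.maxU_exists[OF YGf, of J0] J0Y by auto
  have JYG: "J \<subseteq> Y \<union> G" "NN.lin_indpt J" using J unfolding maximal_def by auto
  have fJ: "finite J" using JYG YGf finite_subset by blast
  have fJ0: "finite J0" using J0Y Yf finite_subset by blast
  define E where "E = J - J0"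
  have EG: "E \<subseteq> G"
  proof
    fix e assume e: "e \<in> E"
    show "e \<in> G"
    proof (rule ccontr)
      assume "e \<notin> G"
      then have eY: "e \<in> Y" using e JYG unfolding E_def by auto
      have "NN.lin_indpt (J0 \<union> {e})" using NN.subset_li_is_li[OF JYG(2)] e J(2) unfolding E_def by auto
      then have "J0 \<union> {e} = J0" using J0 eY J0Y unfolding maximal_def by blast
      then show False using e unfolding E_def by auto
    qed
  qed
  have cJ: "card J \<le> srk N X"
    using NN.sr_card[OF YGf J(1)] NN.sr_mono[OF YGf Xf YGX] by simp
  have cJ0: "card J0 = srk N Y" using NN.sr_card[OF Yf J0] by simp
  have cE: "card E \<le> srk N X - srk N Y" unfolding E_def using card_Diff_subset[OF fJ0 J(2)] cJ cJ0 by simp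
  have X1: "X \<subseteq> spn N (Y \<union> G)"
  proof -
    have "X \<subseteq> kry A G (Suc N)" unfolding X_def by (rule kry_mono) simp
    then have "X \<subseteq> Y \<union> G" using kry_Suc[OF A Gf(2), of N] unfolding X_def Y_def by auto
    then show ?thesis using span_own[OF YGf(2)] by (rule subset_trans)
  qed
  have X2: "Y \<union> G \<subseteq> spn N J" using NN.maxU_span[OF YGf(2) J(1)] by simp
  define S where "S = (\<lambda>e. SOME j. j < m \<and> col B j = e) ` E"
  have Sm: "S \<subseteq> {..<m}" and ES: "E \<subseteq> (\<lambda>j. col B j) ` S"
  proof -
    have ex: "\<exists>j. j < m \<and> col B j = e" if "e \<in> E" for e
      using EG that B unfolding G_def set_cols_eq by auto
    show "S \<subseteq> {..<m}" unfolding S_def using someI_ex[OF ex] by auto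
    show "E \<subseteq> (\<lambda>j. col B j) ` S" unfolding S_def using someI_ex[OF ex] by (auto simp: image_image)
  qed
  have cS: "card S \<le> card E" unfolding S_def using card_image_le fJ unfolding E_def by blast
  have BSc: "(\<lambda>j. col B j) ` S \<subseteq> carrier_vec N" using Sm B by auto
  have X3: "J \<subseteq> spn N ((\<lambda>j. col B j) ` S \<union> Y)"
  proof -
    have j: "J \<subseteq> (\<lambda>j. col B j) ` S \<union> Y" using ES J0Y unfolding E_def by auto
    have c: "(\<lambda>j. col B j) ` S \<union> Y \<subseteq> carrier_vec N" using BSc Yf by auto
    show ?thesis using j span_own[OF c] by (rule subset_trans)
  qed
  have "X \<subseteq> spn N ((\<lambda>j. col B j) ` S \<union> Y)"
    using span_trans[OF X1 span_trans[OF X2 X3]] BSc Yf by auto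
  then show ?thesis using Sm cS cE unfolding X_def Y_def G_def by (intro exI[of _ S]) auto
qed

lemma iterate:
  assumes A: "A \<in> carrier_mat N N" and BS: "BS \<subseteq> carrier_vec N" and X: "X \<subseteq> carrier_vec N"
    and XS: "X \<subseteq> spn N (BS \<union> (*\<^sub>v) A ` X)"
  shows "X \<subseteq> spn N (kry A BS T \<union> (\<lambda>v. A ^\<^sub>m T *\<^sub>v v) ` X)"
proof (induction T)
  case 0
  have "(\<lambda>v. A ^\<^sub>m 0 *\<^sub>v v) ` X = (\<lambda>v. v) ` X" using X A by (intro image_cong) auto
  then have "(\<lambda>v. A ^\<^sub>m 0 *\<^sub>v v) ` X = X" by simp
  then show ?case using span_own[OF X] unfolding kry_def by simp
next
  case (Suc T)
  have c1: "kry A BS (Suc T) \<union> (\<lambda>v. A ^\<^sub>m Suc T *\<^sub>v v) ` X \<subseteq> carrier_vec N"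
    using kry_carrier[OF A BS] X A by (auto intro!: pow_mat_vec_carrier simp del: pow_mat.simps)
  have c2: "BS \<union> (*\<^sub>v) A ` X \<subseteq> carrier_vec N" using BS X A by auto
  have "(\<lambda>v. A ^\<^sub>m T *\<^sub>v v) ` X \<subseteq> spn N ((*\<^sub>v) (A ^\<^sub>m T) ` (BS \<union> (*\<^sub>v) A ` X))"
    using image_span[OF pow_mat_carrier[OF A] c2 XS] by simp
  also have "\<dots> \<subseteq> spn N (kry A BS (Suc T) \<union> (\<lambda>v. A ^\<^sub>m Suc T *\<^sub>v v) ` X)"
  proof (rule span_mono')
    show "(*\<^sub>v) (A ^\<^sub>m T) ` (BS \<union> (*\<^sub>v) A ` X) \<subseteq> kry A BS (Suc T) \<union> (\<lambda>v. A ^\<^sub>m Suc T *\<^sub>v v) ` X"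
    proof
      fix y assume "y \<in> (*\<^sub>v) (A ^\<^sub>m T) ` (BS \<union> (*\<^sub>v) A ` X)"
      then consider g where "g \<in> BS" "y = A ^\<^sub>m T *\<^sub>v g" | x where "x \<in> X" "y = A ^\<^sub>m T *\<^sub>v (A *\<^sub>v x)" by auto
      then show "y \<in> kry A BS (Suc T) \<union> (\<lambda>v. A ^\<^sub>m Suc T *\<^sub>v v) ` X"
      proof cases
        case 1 then show ?thesis unfolding kry_def by (intro UnI1 image_eqI[of _ _ "(T, g)"]) auto
      next
        case 2
        then have "y = A ^\<^sub>m Suc T *\<^sub>v x" using A X assoc_mult_mat_vec[of "A ^\<^sub>m T" N N A N x] by auto
        then show ?thesis using 2 by auto
      qed
    qed
  qed
  finally have "(\<lambda>v. A ^\<^sub>m T *\<^sub>v v) ` X \<subseteq> spn N (kry A BS (Suc T) \<union> (\<lambda>v. A ^\<^sub>m Suc T *\<^sub>v v) ` X)" .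
  moreover have "kry A BS T \<subseteq> spn N (kry A BS (Suc T) \<union> (\<lambda>v. A ^\<^sub>m Suc T *\<^sub>v v) ` X)"
    using kry_mono[of T "Suc T" A BS] span_own[OF c1] by auto
  ultimately have "kry A BS T \<union> (\<lambda>v. A ^\<^sub>m T *\<^sub>v v) ` X \<subseteq> spn N (kry A BS (Suc T) \<union> (\<lambda>v. A ^\<^sub>m Suc T *\<^sub>v v) ` X)"
    by auto
  then show ?case using span_trans[OF Suc.IH _ c1] by blast
qed

lemma C_surj:
  assumes C: "C \<in> carrier_mat n N" and X: "finite X" "X \<subseteq> carrier_vec N"
    and r: "srk n ((*\<^sub>v) C ` X) = n" and y: "y \<in> carrier_vec n"
  shows "\<exists>v\<in>spn N X. C *\<^sub>v v = y"
proof -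
  interpret NN: vec_space "TYPE(real)" N .
  interpret RR: vec_space "TYPE(real)" n .
  define U where "U = set (unit_vecs n :: real vec list)"
  have U: "finite U" "U \<subseteq> carrier_vec n" unfolding U_def using unit_vecs_carrier by auto
  have CX: "finite ((*\<^sub>v) C ` X)" "(*\<^sub>v) C ` X \<subseteq> carrier_vec n" using X C by auto
  have sU: "spn n U = carrier_vec n" unfolding U_def using RR.span_unit_vecs_is_carrier by simp
  have "(*\<^sub>v) C ` X \<subseteq> spn n U" unfolding sU by (rule CX(2))
  moreover have "srk n U \<le> srk n ((*\<^sub>v) C ` X)" using RR.sr_le_n[OF U] r by simp
  ultimately have "spn n U \<subseteq> spn n ((*\<^sub>v) C ` X)" using RR.sr_eq_span[OF CX U] by simp
  then have yS: "y \<in> spn n ((*\<^sub>v) C ` X)" using y unfolding sU by blast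
  let ?P = "(*\<^sub>v) C ` spn N X"
  have "submodule class_ring ?P RR.V"
  proof (rule RR.submoduleI')
    show "?P \<subseteq> carrier_vec n" using C span_carrier'[OF X(2)] by auto
    have "C *\<^sub>v 0\<^sub>v N = 0\<^sub>v n" using mat_vec_zero[OF C] .
    then show "0\<^sub>v n \<in> ?P" using NN.span_zero_in[OF X(2)] by (metis image_eqI)
    show "v + w \<in> ?P" if vP: "v \<in> ?P" and wP: "w \<in> ?P" for v w
    proof -
      obtain a where a: "a \<in> spn N X" "v = C *\<^sub>v a" using vP by auto
      obtain b where b: "b \<in> spn N X" "w = C *\<^sub>v b" using wP by auto
      have "a \<in> carrier_vec N" "b \<in> carrier_vec N" using a b span_carrier'[OF X(2)] by auto
      then have "v + w = C *\<^sub>v (a + b)" using a b C by (simp add: mult_add_distrib_mat_vec)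
      moreover have "a + b \<in> spn N X" using NN.span_add_closed[OF X(2) a(1) b(1)] .
      ultimately show ?thesis by blast
    qed
    show "c \<cdot>\<^sub>v v \<in> ?P" if vP: "v \<in> ?P" for c v
    proof -
      obtain a where a: "a \<in> spn N X" "v = C *\<^sub>v a" using vP by auto
      have "a \<in> carrier_vec N" using a span_carrier'[OF X(2)] by auto
      then have "c \<cdot>\<^sub>v v = C *\<^sub>v (c \<cdot>\<^sub>v a)" using a C by (simp add: mult_mat_vec)
      moreover have "c \<cdot>\<^sub>v a \<in> spn N X" using NN.span_smult_closed[OF X(2) a(1)] .
      ultimately show ?thesis by blast
    qed
  qed
  moreover have "(*\<^sub>v) C ` X \<subseteq> ?P" using span_own[OF X(2)] by auto
  ultimately have "spn n ((*\<^sub>v) C ` X) \<subseteq> ?P" using RR.span_is_subset by blast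
  then show ?thesis using yS by auto
qed


lemma block_arith:
  fixes j m N t :: nat
  assumes j: "j < m" and t: "t < N"
  shows "N \<le> N + (m - 1 - j) * N + t" "N + (m - 1 - j) * N + t < N + m * N"
    "(N + (m - 1 - j) * N + t - N) div N = m - 1 - j" "m - 1 - (m - 1 - j) = j"
proof -
  show "N \<le> N + (m - 1 - j) * N + t" by simp
  obtain q where q: "m - j = Suc q" using j by (cases "m - j") auto
  have q2: "m - 1 - j = q" using q by simp
  have "(m - 1 - j) * N + t < (m - 1 - j) * N + N" using t by simp
  also have "\<dots> = (m - j) * N" using q q2 by simp
  also have "\<dots> \<le> m * N" by (intro mult_le_mono1) simp
  finally show "N + (m - 1 - j) * N + t < N + m * N" by simp
  have "(N + (m - 1 - j) * N + t - N) = t + (m - 1 - j) * N" by simp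
  moreover have "(t + (m - 1 - j) * N) div N = m - 1 - j" using t by simp
  ultimately show "(N + (m - 1 - j) * N + t - N) div N = m - 1 - j" by (simp add: add.commute)
  show "m - 1 - (m - 1 - j) = j" using j by simp
qed

lemma cover:
  assumes A: "A \<in> carrier_mat N N" and B: "B \<in> carrier_mat N m" and N: "0 < N"
    and S: "S \<subseteq> {..<m}"
    and XS: "kry A (set (cols B)) N \<subseteq> spn N ((\<lambda>j. col B j) ` S \<union> (*\<^sub>v) A ` kry A (set (cols B)) N)"
    and L: "L = N + m * N + 1"
    and sp: "sp = (\<lambda>e. if e < N then S else if e < N + m * N then {m - 1 - (e - N) div N} else {})"
  shows "kry A (set (cols B)) N \<subseteq> {reach A B L u | u. adm m (\<lambda>k. sp (L - k)) L u}"
proof -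
  interpret NN: vec_space "TYPE(real)" N .
  define X where "X = kry A (set (cols B)) N"
  define R where "R = {reach A B L u | u. adm m (\<lambda>k. sp (L - k)) L u}"
  define BS where "BS = (\<lambda>j. col B j) ` S"
  have subR: "submodule class_ring R NN.V" unfolding R_def using reach_submodule[OF A B] .
  have Rgen: "A ^\<^sub>m e *\<^sub>v col B j \<in> R" if "e < L" "j \<in> sp e" "j < m" for e j
  proof -
    have "sp (L - (L - e)) = sp e" using that(1) by simp
    then show ?thesis unfolding R_def using reach_gen[OF A B that(1), of j "\<lambda>k. sp (L - k)"] that by simp
  qed
  have Gf: "finite (set (cols B))" "set (cols B) \<subseteq> carrier_vec N" using cols_dim[of B] carrier_matD(1)[OF B] by auto
  have Xc: "X \<subseteq> carrier_vec N" unfolding X_def using kry_carrier[OF A Gf(2)] .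
  have BSc: "BS \<subseteq> carrier_vec N" unfolding BS_def using S B by auto
  have it: "X \<subseteq> spn N (kry A BS N \<union> (\<lambda>v. A ^\<^sub>m N *\<^sub>v v) ` X)"
    using iterate[OF A BSc Xc XS[folded X_def BS_def]] .
  have a: "kry A BS N \<subseteq> R"
  proof
    fix x assume "x \<in> kry A BS N"
    then obtain t i where ti: "t < N" "i \<in> S" "x = A ^\<^sub>m t *\<^sub>v col B i" unfolding kry_def BS_def by auto
    have "sp t = S" using ti sp by simp
    then show "x \<in> R" using Rgen[of t i] ti S L by auto
  qed
  have b: "(\<lambda>v. A ^\<^sub>m N *\<^sub>v v) ` X \<subseteq> R"
  proof
    fix y assume "y \<in> (\<lambda>v. A ^\<^sub>m N *\<^sub>v v) ` X"
    then obtain x where x: "x \<in> X" "y = A ^\<^sub>m N *\<^sub>v x" by auto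
    then obtain t j where tj: "t < N" "j < m" "x = A ^\<^sub>m t *\<^sub>v col B j"
      unfolding X_def kry_def set_cols_eq using B by auto
    define Kj where "Kj = kry A {col B j} N"
    have Kf: "finite {col B j}" "{col B j} \<subseteq> carrier_vec N" using B tj by auto
    have Kc: "Kj \<subseteq> carrier_vec N" "finite Kj" unfolding Kj_def using kry_carrier[OF A Kf(2)] kry_finite[OF Kf(1)] by auto
    have inv: "(*\<^sub>v) A ` Kj \<subseteq> spn N Kj" unfolding Kj_def using kry_inv[OF A Kf] .
    define p where "p = (m - 1 - j) * N"
    have st: "spn N ((\<lambda>v. A ^\<^sub>m (N + p) *\<^sub>v v) ` Kj) = spn N ((\<lambda>v. A ^\<^sub>m N *\<^sub>v v) ` Kj)"
      using pow_image_stab[OF A Kc(2) Kc(1) inv] .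
    have xK: "x \<in> Kj" unfolding Kj_def kry_def using tj by auto
    have "y \<in> spn N ((\<lambda>v. A ^\<^sub>m N *\<^sub>v v) ` Kj)"
      using x xK span_own[of "(\<lambda>v. A ^\<^sub>m N *\<^sub>v v) ` Kj" N] Kc A by (auto intro!: pow_mat_vec_carrier)
    then have yS: "y \<in> spn N ((\<lambda>v. A ^\<^sub>m (N + p) *\<^sub>v v) ` Kj)" using st by simp
    have "(\<lambda>v. A ^\<^sub>m (N + p) *\<^sub>v v) ` Kj \<subseteq> R"
    proof
      fix z assume "z \<in> (\<lambda>v. A ^\<^sub>m (N + p) *\<^sub>v v) ` Kj"
      then obtain t' where t': "t' < N" "z = A ^\<^sub>m (N + p) *\<^sub>v (A ^\<^sub>m t' *\<^sub>v col B j)"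
        unfolding Kj_def kry_def by auto
      have cj: "col B j \<in> carrier_vec N" using B tj by auto
      have z: "z = A ^\<^sub>m (N + p + t') *\<^sub>v col B j"
        using t'(2) pow_mat_vec_add[OF A cj, of "N + p" t'] by simp
      note ar = block_arith[OF tj(2) t'(1)]
      have "sp (N + p + t') = {j}" using ar unfolding sp p_def by simp
      moreover have "N + p + t' < L" using ar L unfolding p_def by simp
      ultimately show "z \<in> R" using z Rgen[of "N + p + t'" j] tj by simp
    qed
    then have "spn N ((\<lambda>v. A ^\<^sub>m (N + p) *\<^sub>v v) ` Kj) \<subseteq> R" using NN.span_is_subset subR by blast
    then show "y \<in> R" using yS by auto
  qed
  have "spn N (kry A BS N \<union> (\<lambda>v. A ^\<^sub>m N *\<^sub>v v) ` X) \<subseteq> R"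
    using a b NN.span_is_subset subR by (metis Un_subset_iff)
  then show ?thesis using it unfolding X_def R_def by auto
qed


lemma srk_empty: "srk n {} = 0"
proof -
  interpret RR: vec_space "TYPE(real)" n .
  have "maximal {} (\<lambda>T. T \<subseteq> ({} :: real vec set) \<and> RR.lin_indpt T)"
    unfolding maximal_def using RR.li_empty by auto
  then show ?thesis using RR.sr_card[of "{}" "{}"] by simp
qed

lemma part2:
  fixes A B C :: "real mat" and N m n s :: nat
  assumes A: "A \<in> carrier_mat N N" and B: "B \<in> carrier_mat N m" and C: "C \<in> carrier_mat n N"
    and s: "0 < s" "s \<le> m" and rC: "rk n (C * ctrb_mat A B) = n"
    and sW: "int s \<ge> int (rk N (ctrb_mat A B)) - int (rk N (A * ctrb_mat A B))"
  shows "output_sparse_controllable A B C s"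
proof (cases "N = 0")
  case True
  have W: "ctrb_mat A B \<in> carrier_mat N (N * m)" using ctrb_carrier[OF A B] .
  have "set (cols (C * ctrb_mat A B)) = {}" using C W True unfolding cols_def by auto
  then have n0: "n = 0" using rC srk_empty[of n] unfolding rk_srk by simp
  have dA: "dim_row A = N" "dim_col B = m" "dim_row C = n" using A B C by auto
  show ?thesis unfolding output_sparse_controllable_def Let_def dA
  proof (intro exI[of _ 1] conjI ballI)
    fix x0 yf :: "real vec" assume "yf \<in> carrier_vec n"
    show "\<exists>u. (\<forall>k\<in>{1..1}. u k \<in> carrier_vec m \<and> sparse_vec s (u k)) \<and>
            C *\<^sub>v finsum_vec TYPE(real) N (\<lambda>k. A ^\<^sub>m (1 - k) * B *\<^sub>v u k) {1..1} + C *\<^sub>v (A ^\<^sub>m 1 *\<^sub>v x0) = yf"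
    proof -
      have e: "{j. j < m \<and> (0\<^sub>v m :: real vec) $ j \<noteq> 0} = {}" by auto
      show ?thesis using n0 C \<open>yf \<in> carrier_vec n\<close>
        by (intro exI[of _ "\<lambda>k. 0\<^sub>v m"]) (auto simp: sparse_vec_def e intro!: eq_vecI)
    qed
  qed simp
next
  case False
  then have N: "0 < N" by simp
  interpret NN: vec_space "TYPE(real)" N .
  define G where "G = set (cols B)"
  define X where "X = kry A G N"
  define W where "W = ctrb_mat A B"
  have Wc: "W \<in> carrier_mat N (N * m)" unfolding W_def using ctrb_carrier[OF A B] .
  have Gf: "finite G" "G \<subseteq> carrier_vec N" unfolding G_def using cols_dim[of B] carrier_matD(1)[OF B] by auto
  have Xf: "finite X" "X \<subseteq> carrier_vec N" unfolding X_def using kry_finite[OF Gf(1)] kry_carrier[OF A Gf(2)] by auto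
  have XW: "set (cols W) = X" unfolding W_def X_def G_def using ctrb_cols[OF A B] .
  have rW: "rk N W = srk N X" unfolding rk_srk XW ..
  have rAW: "rk N (A * W) = srk N ((*\<^sub>v) A ` X)" unfolding rk_srk using cols_mult_set[OF A Wc] XW by simp
  have rCW: "srk n ((*\<^sub>v) C ` X) = n" using rC cols_mult_set[OF C Wc] XW unfolding rk_srk W_def by simp
  obtain S where S: "S \<subseteq> {..<m}" "card S \<le> srk N X - srk N ((*\<^sub>v) A ` X)"
    "X \<subseteq> spn N ((\<lambda>j. col B j) ` S \<union> (*\<^sub>v) A ` X)"
    using greedy[OF A B N] unfolding X_def G_def by blast
  have cS: "card S \<le> s" using S(2) sW rW rAW unfolding W_def by linarith
  have fS: "finite S" using S(1) finite_subset by blast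
  define L where "L = N + m * N + 1"
  define sp where "sp = (\<lambda>e. if e < N then S else if e < N + m * N then {m - 1 - (e - N) div N} else ({} :: nat set))"
  define R where "R = {reach A B L u | u. adm m (\<lambda>k. sp (L - k)) L u}"
  have XR: "X \<subseteq> R" unfolding R_def X_def G_def
    using cover[OF A B N S(1) S(3)[unfolded X_def G_def] L_def sp_def] .
  have subR: "submodule class_ring R NN.V" unfolding R_def using reach_submodule[OF A B] .
  have sXR: "spn N X \<subseteq> R" using NN.span_is_subset[OF XR subR] .
  have spf: "finite (sp e) \<and> card (sp e) \<le> s" for e
    unfolding sp_def using fS cS s by auto
  have dA: "dim_row A = N" "dim_col B = m" "dim_row C = n" using A B C by auto
  show ?thesis unfolding output_sparse_controllable_def Let_def dA
  proof (intro exI[of _ L] conjI ballI)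
    show "0 < L" unfolding L_def by simp
    fix x0 yf :: "real vec" assume x0: "x0 \<in> carrier_vec N" and yf: "yf \<in> carrier_vec n"
    define z where "z = C *\<^sub>v (A ^\<^sub>m L *\<^sub>v x0)"
    have zc: "z \<in> carrier_vec n" unfolding z_def using C A x0 by (auto intro!: pow_mat_vec_carrier)
    have yc: "yf - z \<in> carrier_vec n" using yf zc by auto
    obtain v where v: "v \<in> spn N X" "C *\<^sub>v v = yf - z" using C_surj[OF C Xf rCW yc] by blast
    have "v \<in> R" using v sXR by auto
    then obtain u where u: "adm m (\<lambda>k. sp (L - k)) L u" "v = reach A B L u" unfolding R_def by blast
    show "\<exists>u. (\<forall>k\<in>{1..L}. u k \<in> carrier_vec m \<and> sparse_vec s (u k)) \<and>
            C *\<^sub>v finsum_vec TYPE(real) N (\<lambda>k. A ^\<^sub>m (L - k) * B *\<^sub>v u k) {1..L} + C *\<^sub>v (A ^\<^sub>m L *\<^sub>v x0) = yf"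
    proof (intro exI[of _ u] conjI ballI)
      fix k assume k: "k \<in> {1..L}"
      show "u k \<in> carrier_vec m" using u(1) k unfolding adm_def by auto
      show "sparse_vec s (u k)" using adm_sparse[OF u(1) k] spf by auto
    next
      have "finsum_vec TYPE(real) N (\<lambda>k. A ^\<^sub>m (L - k) * B *\<^sub>v u k) {1..L} = v"
        unfolding u(2) reach_def dA ..
      then have "C *\<^sub>v finsum_vec TYPE(real) N (\<lambda>k. A ^\<^sub>m (L - k) * B *\<^sub>v u k) {1..L} + C *\<^sub>v (A ^\<^sub>m L *\<^sub>v x0)
          = (yf - z) + z" using v(2) unfolding z_def by simp
      also have "\<dots> = yf" using yf zc by (intro eq_vecI) auto
      finally show "C *\<^sub>v finsum_vec TYPE(real) N (\<lambda>k. A ^\<^sub>m (L - k) * B *\<^sub>v u k) {1..L} + C *\<^sub>v (A ^\<^sub>m L *\<^sub>v x0) = yf" .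
    qed
  qed
qed

theorem mainTheorem5:
  fixes A B C :: "real mat" and N m n :: nat
  assumes "A \<in> carrier_mat N N" and "B \<in> carrier_mat N m" and "C \<in> carrier_mat n N"
  shows "(\<forall>i::nat. R_idx A B C i \<le> int (rk N (ctrb_mat A B)) - int (rk N (A * ctrb_mat A B))
                \<and> int (rk N (ctrb_mat A B)) - int (rk N (A * ctrb_mat A B)) \<le> int N - int (rk N A))
       \<and> (\<forall>s::nat. 0 < s \<and> s \<le> m \<longrightarrow> rk n (C * ctrb_mat A B) = n
                \<longrightarrow> int s \<ge> int (rk N (ctrb_mat A B)) - int (rk N (A * ctrb_mat A B))
                \<longrightarrow> output_sparse_controllable A B C s)"
  using part1[OF assms] part2[OF assms] by blast

end
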